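(* Let $c>0$ and $\lambda\in C^2((0,\infty))$. Let $f_{++},f_{+-},f_{-+},f_{--}$ be sufficiently smooth (say $C^4$) functions of $(x,y,t)\in\mathbb{R}^2\times(0,\infty)$ satisfying $$\begin{aligned} \partial_t f_{++}&=-\tfrac c2\partial_x f_{++}-\tfrac c2\partial_y f_{++}+\tfrac{\lambda(t)}{2}(f_{-+}+f_{+-}-2f_{++}),\\ \partial_t f_{+-}&=-\tfrac c2\partial_x f_{+-}+\tfrac c2\partial_y f_{+-}+\tfrac{\lambda(t)}{2}(f_{--}+f_{++}-2f_{+-}),\\ \partial_t f_{-+}&=\tfrac c2\partial_x f_{-+}-\tfrac c2\partial_y f_{-+}+\tfrac{\lambda(t)}{2}(f_{++}+f_{--}-2f_{-+}),\\ \partial_t f_{--}&=\tfrac c2\partial_x f_{--}+\tfrac c2\partial_y f_{--}+\tfrac{\lambda(t)}{2}(f_{+-}+f_{-+}-2f_{--}). \end{aligned}$$ Then $p=f_{++}+f_{+-}+f_{-+}+f_{--}$ satisfies $$\begin{aligned} \frac{\partial^4 p}{\partial t^4}=&-4\lambda\frac{\partial^3 p}{\partial t^3}+\Big(\frac{c^2}{2}\Delta-5\lambda^2-4\lambda'\Big)\frac{\partial^2 p}{\partial t^2}+\Big(\lambda c^2\Delta-5\lambda\lambda'-2\lambda^3-\lambda''\Big)\frac{\partial p}{\partial t}\\ &-\frac{c^4}{16}\Big(\frac{\partial^2}{\partial x^2}-\frac{\partial^2}{\partial y^2}\Big)^2p+\frac{c^2}{2}\big(\lambda^2+\lambda'\big)\Delta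 p, \end{aligned}$$ where $\lambda=\lambda(t)$, $\lambda'=\frac{d\lambda}{dt}$, $\lambda''=\frac{d^2\lambda}{dt^2}$ and $\Delta=\frac{\partial^2}{\partial x^2}+\frac{\partial^2}{\partial y^2}$.
   Context: Interpretation: $f_{ab}$ are the joint densities of the position of a planar particle moving with velocity components $\pm c/2$ in the four diagonal directions $(a\,b)\in\{(++),(+-),(-+),(--)\}$, switching at the events of a non-homogeneous Poisson process of rate $\lambda(t)$ to one of the two orthogonal directions with probability $1/2$ each; $p$ is then the (absolutely continuous part of the) density of the position. *)

theory Defs
  imports "HOL-Analysis.Analysis"
begin

definition pdx :: "(real \<Rightarrow> real \<Rightarrow> real \<Rightarrow> real) \<Rightarrow> real \<Rightarrow> real \<Rightarrow> real \<Rightarrow> real" where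
  "pdx f = (\<lambda>x y t. deriv (\<lambda>s. f s y t) x)"

definition pdy :: "(real \<Rightarrow> real \<Rightarrow> real \<Rightarrow> real) \<Rightarrow> real \<Rightarrow> real \<Rightarrow> real \<Rightarrow> real" where
  "pdy f = (\<lambda>x y t. deriv (\<lambda>s. f x s t) y)"

definition pdt :: "(real \<Rightarrow> real \<Rightarrow> real \<Rightarrow> real) \<Rightarrow> real \<Rightarrow> real \<Rightarrow> real \<Rightarrow> real" where
  "pdt f = (\<lambda>x y t. deriv (\<lambda>s. f x y s) t)"

definition partials_exist :: "(real \<Rightarrow> real \<Rightarrow> real \<Rightarrow> real) \<Rightarrow> real \<Rightarrow> real \<Rightarrow> real \<Rightarrow> bool" where
  "partials_exist f x y t \<longleftrightarrow>
     (\<lambda>s. f s y t) differentiable (at x) \<and>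
     (\<lambda>s. f x s t) differentiable (at y) \<and>
     (\<lambda>s. f x y s) differentiable (at t)"

fun Ck_on :: "nat \<Rightarrow> (real \<Rightarrow> real \<Rightarrow> real \<Rightarrow> real) \<Rightarrow> (real \<times> real \<times> real) set \<Rightarrow> bool" where
  "Ck_on 0 f S = continuous_on S (\<lambda>(x, y, t). f x y t)"
| "Ck_on (Suc k) f S =
     (continuous_on S (\<lambda>(x, y, t). f x y t) \<and>
      (\<forall>(x, y, t) \<in> S. partials_exist f x y t) \<and>
      Ck_on k (pdx f) S \<and> Ck_on k (pdy f) S \<and> Ck_on k (pdt f) S)"

fun Ck_on1 :: "nat \<Rightarrow> (real \<Rightarrow> real) \<Rightarrow> real set \<Rightarrow> bool" where
  "Ck_on1 0 g S = continuous_on S g"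
| "Ck_on1 (Suc k) g S =
     (continuous_on S g \<and> (\<forall>t\<in>S. g differentiable (at t)) \<and> Ck_on1 k (deriv g) S)"

definition lap :: "(real \<Rightarrow> real \<Rightarrow> real \<Rightarrow> real) \<Rightarrow> real \<Rightarrow> real \<Rightarrow> real \<Rightarrow> real" where
  "lap f = (\<lambda>x y t. pdx (pdx f) x y t + pdy (pdy f) x y t)"

definition hyp_op :: "(real \<Rightarrow> real \<Rightarrow> real \<Rightarrow> real) \<Rightarrow> real \<Rightarrow> real \<Rightarrow> real \<Rightarrow> real" where
  "hyp_op f = (\<lambda>x y t. pdx (pdx f) x y t - pdy (pdy f) x y t)"

end

theory Submission
  imports Defs
begin


lemma clairaut:
  fixes g gu gv guv :: "real \<Rightarrow> real \<Rightarrow> real" and u v d :: real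
  assumes d: "d > 0"
  and gu: "\<And>a b. \<bar>a-u\<bar> < d \<Longrightarrow> \<bar>b-v\<bar> < d \<Longrightarrow> ((\<lambda>s. g s b) has_real_derivative gu a b) (at a)"
  and gv: "\<And>a b. \<bar>a-u\<bar> < d \<Longrightarrow> \<bar>b-v\<bar> < d \<Longrightarrow> ((\<lambda>s. g a s) has_real_derivative gv a b) (at b)"
  and guv: "\<And>a b. \<bar>a-u\<bar> < d \<Longrightarrow> \<bar>b-v\<bar> < d \<Longrightarrow> ((\<lambda>s. gu a s) has_real_derivative guv a b) (at b)"
  and cont: "continuous_on ({u-d<..<u+d} \<times> {v-d<..<v+d}) (\<lambda>(a,b). guv a b)"
  shows "((\<lambda>s. gv s v) has_real_derivative guv u v) (at u)"
proof -
  define a0 where "a0 = u - d/2"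
  define e where "e = u + d/2"
  have a0e: "a0 < u" "u < e" using d by (auto simp: a0_def e_def)
  have inI: "\<bar>w - u\<bar> < d" if "w \<in> {a0..e}" for w using that d by (auto simp: a0_def e_def)
  have step1: "((\<lambda>w. gu w b) has_integral (g u' b - g a0 b)) {a0..u'}"
    if b: "\<bar>b-v\<bar> < d" and u': "u' \<in> {a0..e}" for b u'
  proof (rule fundamental_theorem_of_calculus)
    show "a0 \<le> u'" using u' by auto
    fix x assume x: "x \<in> {a0..u'}"
    have "\<bar>x - u\<bar> < d" using inI[of x] x u' by auto
    then have "((\<lambda>s. g s b) has_real_derivative gu x b) (at x within {a0..u'})"
      using gu[OF _ b] has_field_derivative_at_within by blast
    then show "((\<lambda>s. g s b) has_vector_derivative gu x b) (at x within {a0..u'})"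
      by (simp add: has_real_derivative_iff_has_vector_derivative)
  qed
  have step2: "gv u' v - gv a0 v = integral {a0..u'} (\<lambda>w. guv w v)" if u': "u' \<in> {a0..e}" for u'
  proof -
    define U where "U = {v - d/2<..<v + d/2}"
    have vU: "v \<in> U" "open U" "convex U" using d by (auto simp: U_def)
    have bU: "\<bar>b - v\<bar> < d" if "b \<in> U" for b using that d by (auto simp: U_def)
    have "((\<lambda>b. integral (cbox a0 u') (\<lambda>w. gu w b)) has_field_derivative integral (cbox a0 u') (\<lambda>w. guv w v)) (at v within U)"
    proof (rule leibniz_rule_field_derivative[where f="\<lambda>b w. gu w b" and fx="\<lambda>b w. guv w b"])
      fix b w assume b: "b \<in> U" and w: "w \<in> cbox a0 u'"
      have "\<bar>w - u\<bar> < d" using inI[of w] w u' by auto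
      then show "((\<lambda>b. gu w b) has_field_derivative guv w b) (at b within U)"
        using guv bU[OF b] has_field_derivative_at_within by blast
    next
      fix b assume b: "b \<in> U"
      show "(\<lambda>w. gu w b) integrable_on cbox a0 u'"
        using step1[OF bU[OF b] u'] by (auto simp: integrable_on_def)
    next
      have sub: "(\<lambda>z. (snd z, fst z)) ` (U \<times> cbox a0 u') \<subseteq> {u-d<..<u+d} \<times> {v-d<..<v+d}"
        using inI u' bU by force
      have c1: "continuous_on (U \<times> cbox a0 u') (\<lambda>z. (snd z, fst z))"
        by (intro continuous_intros)
      have "continuous_on (U \<times> cbox a0 u') ((\<lambda>(a,b). guv a b) \<circ> (\<lambda>z. (snd z, fst z)))"
        by (rule continuous_on_compose[OF c1 continuous_on_subset[OF cont sub]])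
      then show "continuous_on (U \<times> cbox a0 u') (\<lambda>(x, t). guv t x)"
        by (simp add: o_def case_prod_beta)
    qed (use vU in auto)
    then have D1: "((\<lambda>b. integral {a0..u'} (\<lambda>w. gu w b)) has_field_derivative integral {a0..u'} (\<lambda>w. guv w v)) (at v)"
      using vU at_within_open by (metis box_real(2))
    have eqU: "g u' b - g a0 b = integral {a0..u'} (\<lambda>w. gu w b)" if "b \<in> U" for b
      using step1[OF bU[OF that] u'] by (simp add: integral_unique)
    have D2: "((\<lambda>b. g u' b - g a0 b) has_field_derivative gv u' v - gv a0 v) (at v)"
      using inI u' a0e d by (intro DERIV_diff gv) (auto simp: a0_def)
    have D3: "((\<lambda>b. integral {a0..u'} (\<lambda>w. gu w b)) has_field_derivative gv u' v - gv a0 v) (at v)"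
      by (rule has_field_derivative_transform_within_open[OF D2 vU(2) vU(1)]) (use eqU in auto)
    show ?thesis using DERIV_unique[OF D3 D1] .
  qed
  have contv: "continuous_on {a0..e} (\<lambda>w. guv w v)"
  proof -
    have sub: "(\<lambda>w. (w, v)) ` {a0..e} \<subseteq> {u-d<..<u+d} \<times> {v-d<..<v+d}"
      using inI d by force
    have "continuous_on {a0..e} ((\<lambda>(a,b). guv a b) \<circ> (\<lambda>w. (w, v)))"
      by (rule continuous_on_compose) (auto intro!: continuous_intros continuous_on_subset[OF cont sub])
    then show ?thesis by (simp add: o_def)
  qed
  have "((\<lambda>s. integral {a0..s} (\<lambda>w. guv w v)) has_vector_derivative guv u v) (at u within {a0..e})"
    using integral_has_vector_derivative[OF contv, of u] a0e by auto
  then have H: "((\<lambda>s. gv a0 v + integral {a0..s} (\<lambda>w. guv w v)) has_real_derivative guv u v) (at u)"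
    using a0e by (auto simp: at_within_Icc_at has_real_derivative_iff_has_vector_derivative[symmetric] intro!: derivative_eq_intros)
  show ?thesis
  proof (rule has_field_derivative_transform_within_open[OF H, of "{a0<..<e}"])
    fix s assume "s \<in> {a0<..<e}"
    then show "gv a0 v + integral {a0..s} (\<lambda>w. guv w v) = gv s v" using step2[of s] by auto
  qed (use a0e in auto)
qed



abbreviation SS :: "(real \<times> real \<times> real) set" where "SS \<equiv> UNIV \<times> UNIV \<times> {0<..}"

definition dX :: "(real \<Rightarrow> real \<Rightarrow> real \<Rightarrow> real) \<Rightarrow> real \<Rightarrow> real \<Rightarrow> real \<Rightarrow> bool" where
  "dX f x y t \<longleftrightarrow> (\<lambda>s. f s y t) differentiable (at x)"
definition dY :: "(real \<Rightarrow> real \<Rightarrow> real \<Rightarrow> real) \<Rightarrow> real \<Rightarrow> real \<Rightarrow> real \<Rightarrow> bool" where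
  "dY f x y t \<longleftrightarrow> (\<lambda>s. f x s t) differentiable (at y)"
definition dT :: "(real \<Rightarrow> real \<Rightarrow> real \<Rightarrow> real) \<Rightarrow> real \<Rightarrow> real \<Rightarrow> real \<Rightarrow> bool" where
  "dT f x y t \<longleftrightarrow> (\<lambda>s. f x y s) differentiable (at t)"
definition eqS :: "(real \<Rightarrow> real \<Rightarrow> real \<Rightarrow> real) \<Rightarrow> (real \<Rightarrow> real \<Rightarrow> real \<Rightarrow> real) \<Rightarrow> bool" where
  "eqS f g \<longleftrightarrow> (\<forall>x y t. 0 < t \<longrightarrow> f x y t = g x y t)"

lemma rd: "h differentiable (at z) \<Longrightarrow> (h has_real_derivative deriv h z) (at z)"
  using DERIV_deriv_iff_real_differentiable by blast

lemma dif: "(h has_real_derivative D) (at z) \<Longrightarrow> h differentiable (at z)"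
  using DERIV_deriv_iff_real_differentiable DERIV_imp_deriv by metis

subsection \<open>pointwise linearity\<close>

lemma pdx_add [simp]: "dX f x y t \<Longrightarrow> dX g x y t \<Longrightarrow>
  pdx (\<lambda>x y t. f x y t + g x y t) x y t = pdx f x y t + pdx g x y t"
  unfolding dX_def pdx_def by (intro DERIV_imp_deriv DERIV_add rd)
lemma pdx_diff [simp]: "dX f x y t \<Longrightarrow> dX g x y t \<Longrightarrow>
  pdx (\<lambda>x y t. f x y t - g x y t) x y t = pdx f x y t - pdx g x y t"
  unfolding dX_def pdx_def by (intro DERIV_imp_deriv DERIV_diff rd)
lemma pdx_minus [simp]: "dX f x y t \<Longrightarrow>
  pdx (\<lambda>x y t. - f x y t) x y t = - pdx f x y t"
  unfolding dX_def pdx_def by (intro DERIV_imp_deriv DERIV_minus rd)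
lemma pdx_mul [simp]: "dX f x y t \<Longrightarrow>
  pdx (\<lambda>x y t. h t * f x y t) x y t = h t * pdx f x y t"
  unfolding dX_def pdx_def by (intro DERIV_imp_deriv DERIV_cmult rd)

lemma pdy_add [simp]: "dY f x y t \<Longrightarrow> dY g x y t \<Longrightarrow>
  pdy (\<lambda>x y t. f x y t + g x y t) x y t = pdy f x y t + pdy g x y t"
  unfolding dY_def pdy_def by (intro DERIV_imp_deriv DERIV_add rd)
lemma pdy_diff [simp]: "dY f x y t \<Longrightarrow> dY g x y t \<Longrightarrow>
  pdy (\<lambda>x y t. f x y t - g x y t) x y t = pdy f x y t - pdy g x y t"
  unfolding dY_def pdy_def by (intro DERIV_imp_deriv DERIV_diff rd)
lemma pdy_minus [simp]: "dY f x y t \<Longrightarrow>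
  pdy (\<lambda>x y t. - f x y t) x y t = - pdy f x y t"
  unfolding dY_def pdy_def by (intro DERIV_imp_deriv DERIV_minus rd)
lemma pdy_mul [simp]: "dY f x y t \<Longrightarrow>
  pdy (\<lambda>x y t. h t * f x y t) x y t = h t * pdy f x y t"
  unfolding dY_def pdy_def by (intro DERIV_imp_deriv DERIV_cmult rd)

lemma pdt_add [simp]: "dT f x y t \<Longrightarrow> dT g x y t \<Longrightarrow>
  pdt (\<lambda>x y t. f x y t + g x y t) x y t = pdt f x y t + pdt g x y t"
  unfolding dT_def pdt_def by (intro DERIV_imp_deriv DERIV_add rd)
lemma pdt_diff [simp]: "dT f x y t \<Longrightarrow> dT g x y t \<Longrightarrow>
  pdt (\<lambda>x y t. f x y t - g x y t) x y t = pdt f x y t - pdt g x y t"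
  unfolding dT_def pdt_def by (intro DERIV_imp_deriv DERIV_diff rd)
lemma pdt_minus [simp]: "dT f x y t \<Longrightarrow>
  pdt (\<lambda>x y t. - f x y t) x y t = - pdt f x y t"
  unfolding dT_def pdt_def by (intro DERIV_imp_deriv DERIV_minus rd)
lemma pdt_mul [simp]: "h differentiable (at t) \<Longrightarrow> dT f x y t \<Longrightarrow>
  pdt (\<lambda>x y t. h t * f x y t) x y t = deriv h t * f x y t + h t * pdt f x y t"
proof -
  assume a: "h differentiable (at t)" "dT f x y t"
  have "deriv (\<lambda>s. h s * f x y s) t = deriv h t * f x y t + deriv (\<lambda>s. f x y s) t * h t"
    using DERIV_mult[OF rd[OF a(1)] rd[OF a(2)[unfolded dT_def]]] by (rule DERIV_imp_deriv)
  then show ?thesis by (simp add: pdt_def algebra_simps)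
qed

lemma dX_add [simp]: "dX f x y t \<Longrightarrow> dX g x y t \<Longrightarrow> dX (\<lambda>x y t. f x y t + g x y t) x y t"
  unfolding dX_def by (intro differentiable_add)
lemma dX_diff [simp]: "dX f x y t \<Longrightarrow> dX g x y t \<Longrightarrow> dX (\<lambda>x y t. f x y t - g x y t) x y t"
  unfolding dX_def by (intro differentiable_diff)
lemma dX_minus [simp]: "dX f x y t \<Longrightarrow> dX (\<lambda>x y t. - f x y t) x y t"
  unfolding dX_def by (intro differentiable_minus)
lemma dX_mul [simp]: "dX f x y t \<Longrightarrow> dX (\<lambda>x y t. h t * f x y t) x y t"
  unfolding dX_def by (intro differentiable_mult differentiable_const)
lemma dY_add [simp]: "dY f x y t \<Longrightarrow> dY g x y t \<Longrightarrow> dY (\<lambda>x y t. f x y t + g x y t) x y t"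
  unfolding dY_def by (intro differentiable_add)
lemma dY_diff [simp]: "dY f x y t \<Longrightarrow> dY g x y t \<Longrightarrow> dY (\<lambda>x y t. f x y t - g x y t) x y t"
  unfolding dY_def by (intro differentiable_diff)
lemma dY_minus [simp]: "dY f x y t \<Longrightarrow> dY (\<lambda>x y t. - f x y t) x y t"
  unfolding dY_def by (intro differentiable_minus)
lemma dY_mul [simp]: "dY f x y t \<Longrightarrow> dY (\<lambda>x y t. h t * f x y t) x y t"
  unfolding dY_def by (intro differentiable_mult differentiable_const)
lemma dT_add [simp]: "dT f x y t \<Longrightarrow> dT g x y t \<Longrightarrow> dT (\<lambda>x y t. f x y t + g x y t) x y t"
  unfolding dT_def by (intro differentiable_add)
lemma dT_diff [simp]: "dT f x y t \<Longrightarrow> dT g x y t \<Longrightarrow> dT (\<lambda>x y t. f x y t - g x y t) x y t"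
  unfolding dT_def by (intro differentiable_diff)
lemma dT_minus [simp]: "dT f x y t \<Longrightarrow> dT (\<lambda>x y t. - f x y t) x y t"
  unfolding dT_def by (intro differentiable_minus)
lemma dT_mul [simp]: "h differentiable (at t) \<Longrightarrow> dT f x y t \<Longrightarrow> dT (\<lambda>x y t. h t * f x y t) x y t"
  unfolding dT_def by (intro differentiable_mult)

subsection \<open>congruence\<close>

lemma eqS_pdx: "eqS f g \<Longrightarrow> eqS (pdx f) (pdx g)"
  unfolding eqS_def pdx_def by auto
lemma eqS_pdy: "eqS f g \<Longrightarrow> eqS (pdy f) (pdy g)"
  unfolding eqS_def pdy_def by auto
lemma eqS_pdt: "eqS f g \<Longrightarrow> eqS (pdt f) (pdt g)"
  unfolding eqS_def pdt_def
proof (intro allI impI)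
  fix x y t :: real assume h: "\<forall>x y t. 0 < t \<longrightarrow> f x y t = g x y t" and t: "0 < t"
  have "eventually (\<lambda>s. f x y s = g x y s) (nhds t)"
    unfolding eventually_nhds using t h by (intro exI[of _ "{0<..}"]) auto
  then show "deriv (\<lambda>s. f x y s) t = deriv (\<lambda>s. g x y s) t" by (rule deriv_cong_ev) simp
qed
lemma eqS_refl: "eqS f f" unfolding eqS_def by auto
lemma eqS_sym: "eqS f g \<Longrightarrow> eqS g f" unfolding eqS_def by auto
lemma eqS_trans: "eqS f g \<Longrightarrow> eqS g h \<Longrightarrow> eqS f h" unfolding eqS_def by auto
lemma eqSD: "eqS f g \<Longrightarrow> 0 < t \<Longrightarrow> f x y t = g x y t" unfolding eqS_def by auto

lemma dT_cong: assumes "eqS f g" "0 < t" "dT f x y t" shows "dT g x y t"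
proof -
  have "(\<lambda>s. f x y s) differentiable (at t within UNIV)" using assms(3) by (simp add: dT_def)
  then have "(\<lambda>s. g x y s) differentiable (at t within UNIV)"
    by (rule differentiable_transform_within[where d=t]) (use assms in \<open>auto simp: eqS_def dist_real_def\<close>)
  then show ?thesis by (simp add: dT_def)
qed

lemma Ck_cong: "eqS f g \<Longrightarrow> Ck_on k f SS \<Longrightarrow> Ck_on k g SS"
proof (induction k arbitrary: f g)
  case 0
  have "continuous_on SS (\<lambda>(x, y, t). f x y t)" using 0 by simp
  then show ?case unfolding Ck_on.simps
    by (rule continuous_on_cong[THEN iffD1, OF refl, rotated]) (use 0 in \<open>auto simp: eqS_def\<close>)
next
  case (Suc k)
  have "continuous_on SS (\<lambda>(x, y, t). f x y t)" using Suc by simp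
  then have c: "continuous_on SS (\<lambda>(x, y, t). g x y t)"
    by (rule continuous_on_cong[THEN iffD1, OF refl, rotated]) (use Suc in \<open>auto simp: eqS_def\<close>)
  have pe: "partials_exist g x y t" if "0 < t" for x y t
  proof -
    have "partials_exist f x y t" using Suc.prems(2) that by auto
    moreover have "(\<lambda>s. f s y t) = (\<lambda>s. g s y t)" "(\<lambda>s. f x s t) = (\<lambda>s. g x s t)"
      using Suc.prems(1) that by (auto simp: eqS_def)
    moreover have "dT g x y t" using dT_cong[OF Suc.prems(1) that] calculation(1)
      by (auto simp: partials_exist_def dT_def)
    ultimately show ?thesis by (auto simp: partials_exist_def dT_def)
  qed
  show ?case using Suc.prems c pe Suc.IH[OF eqS_pdx[OF Suc.prems(1)]]
      Suc.IH[OF eqS_pdy[OF Suc.prems(1)]] Suc.IH[OF eqS_pdt[OF Suc.prems(1)]] by auto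
qed

lemma ck_dX [simp]: "Ck_on (Suc k) f SS \<Longrightarrow> 0 < t \<Longrightarrow> dX f x y t"
  by (auto simp: dX_def partials_exist_def)
lemma ck_dY [simp]: "Ck_on (Suc k) f SS \<Longrightarrow> 0 < t \<Longrightarrow> dY f x y t"
  by (auto simp: dY_def partials_exist_def)
lemma ck_dT [simp]: "Ck_on (Suc k) f SS \<Longrightarrow> 0 < t \<Longrightarrow> dT f x y t"
  by (auto simp: dT_def partials_exist_def)
lemma ck_pdx: "Ck_on (Suc k) f SS \<Longrightarrow> Ck_on k (pdx f) SS" by simp
lemma ck_pdy: "Ck_on (Suc k) f SS \<Longrightarrow> Ck_on k (pdy f) SS" by simp
lemma ck_pdt: "Ck_on (Suc k) f SS \<Longrightarrow> Ck_on k (pdt f) SS" by simp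
lemma ck_cont: "Ck_on k f SS \<Longrightarrow> continuous_on SS (\<lambda>(x, y, t). f x y t)" by (cases k) auto

lemma ck_lin: "Ck_on k f SS \<Longrightarrow> Ck_on k g SS \<Longrightarrow> Ck_on k (\<lambda>x y t. a * f x y t + b * g x y t) SS"
proof (induction k arbitrary: f g)
  case 0
  then show ?case by (auto simp: case_prod_beta intro!: continuous_intros)
next
  case (Suc k)
  have c: "continuous_on SS (\<lambda>(x, y, t). a * f x y t + b * g x y t)"
    using ck_cont[OF Suc.prems(1)] ck_cont[OF Suc.prems(2)]
    by (auto simp: case_prod_beta intro!: continuous_intros)
  have pe: "partials_exist (\<lambda>x y t. a * f x y t + b * g x y t) x y t" if "0 < t" for x y t
    using ck_dX[OF Suc.prems(1) that] ck_dY[OF Suc.prems(1) that] ck_dT[OF Suc.prems(1) that]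
      ck_dX[OF Suc.prems(2) that] ck_dY[OF Suc.prems(2) that] ck_dT[OF Suc.prems(2) that]
    by (auto simp: partials_exist_def dX_def dY_def dT_def)
  have ex: "eqS (\<lambda>x y t. a * pdx f x y t + b * pdx g x y t) (pdx (\<lambda>x y t. a * f x y t + b * g x y t))"
    using Suc.prems unfolding eqS_def by (auto simp del: Ck_on.simps)
  have ey: "eqS (\<lambda>x y t. a * pdy f x y t + b * pdy g x y t) (pdy (\<lambda>x y t. a * f x y t + b * g x y t))"
    using Suc.prems unfolding eqS_def by (auto simp del: Ck_on.simps)
  have et: "eqS (\<lambda>x y t. a * pdt f x y t + b * pdt g x y t) (pdt (\<lambda>x y t. a * f x y t + b * g x y t))"
    using Suc.prems unfolding eqS_def by (auto simp del: Ck_on.simps)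
  show ?case
    apply (simp only: Ck_on.simps(2))
    apply (intro conjI c)
    using pe apply auto[1]
    apply (rule Ck_cong[OF ex], rule Suc.IH) using Suc.prems apply simp_all[2]
    apply (rule Ck_cong[OF ey], rule Suc.IH) using Suc.prems apply simp_all[2]
    apply (rule Ck_cong[OF et], rule Suc.IH) using Suc.prems apply simp_all[2]
    done
qed



lemma cont_slice_xt: "continuous_on SS (\<lambda>(x, y, t). h x y t) \<Longrightarrow> 0 < t \<Longrightarrow>
  continuous_on ({x-d<..<x+d} \<times> {t-t<..<t+t}) (\<lambda>(a,b). h a y b)"
proof -
  assume c: "continuous_on SS (\<lambda>(x, y, t). h x y t)" and t: "0 < t"
  have sub: "(\<lambda>z. (fst z, y, snd z)) ` ({x-d<..<x+d} \<times> {t-t<..<t+t}) \<subseteq> SS" by auto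
  have "continuous_on ({x-d<..<x+d} \<times> {t-t<..<t+t}) ((\<lambda>(x, y, t). h x y t) \<circ> (\<lambda>z. (fst z, y, snd z)))"
    by (rule continuous_on_compose[OF _ continuous_on_subset[OF c sub]]) (intro continuous_intros)
  then show ?thesis by (simp add: o_def case_prod_beta)
qed

lemma cont_slice_yt: "continuous_on SS (\<lambda>(x, y, t). h x y t) \<Longrightarrow> 0 < t \<Longrightarrow>
  continuous_on ({y-d<..<y+d} \<times> {t-t<..<t+t}) (\<lambda>(a,b). h x a b)"
proof -
  assume c: "continuous_on SS (\<lambda>(x, y, t). h x y t)" and t: "0 < t"
  have sub: "(\<lambda>z. (x, fst z, snd z)) ` ({y-d<..<y+d} \<times> {t-t<..<t+t}) \<subseteq> SS" by auto
  have "continuous_on ({y-d<..<y+d} \<times> {t-t<..<t+t}) ((\<lambda>(x, y, t). h x y t) \<circ> (\<lambda>z. (x, fst z, snd z)))"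
    by (rule continuous_on_compose[OF _ continuous_on_subset[OF c sub]]) (intro continuous_intros)
  then show ?thesis by (simp add: o_def case_prod_beta)
qed

lemma cont_slice_xy: "continuous_on SS (\<lambda>(x, y, t). h x y t) \<Longrightarrow> 0 < t \<Longrightarrow>
  continuous_on ({x-d<..<x+d} \<times> {y-d<..<y+d}) (\<lambda>(a,b). h a b t)"
proof -
  assume c: "continuous_on SS (\<lambda>(x, y, t). h x y t)" and t: "0 < t"
  have sub: "(\<lambda>z. (fst z, snd z, t)) ` ({x-d<..<x+d} \<times> {y-d<..<y+d}) \<subseteq> SS" using t by auto
  have "continuous_on ({x-d<..<x+d} \<times> {y-d<..<y+d}) ((\<lambda>(x, y, t). h x y t) \<circ> (\<lambda>z. (fst z, snd z, t)))"
    by (rule continuous_on_compose[OF _ continuous_on_subset[OF c sub]]) (intro continuous_intros)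
  then show ?thesis by (simp add: o_def case_prod_beta)
qed

lemma comm_tx: assumes f: "Ck_on 2 f SS" shows "eqS (pdt (pdx f)) (pdx (pdt f))"
  unfolding eqS_def
proof (intro allI impI)
  fix x y t :: real assume t: "0 < t"
  have f1: "Ck_on (Suc k) f SS" if "k \<le> 1" for k using f that
    by (cases k) (auto simp: numeral_2_eq_2)
  have fx: "Ck_on (Suc 0) (pdx f) SS" using f by (simp add: numeral_2_eq_2)
  have fxt: "Ck_on 0 (pdt (pdx f)) SS" using fx by simp
  have "((\<lambda>s. pdt f s y t) has_real_derivative pdt (pdx f) x y t) (at x)"
  proof (rule clairaut[where g="\<lambda>a b. f a y b" and gu="\<lambda>a b. pdx f a y b" and gv="\<lambda>a b. pdt f a y b" and guv="\<lambda>a b. pdt (pdx f) a y b" and d=t])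
    fix a b :: real assume ab: "\<bar>a - x\<bar> < t" "\<bar>b - t\<bar> < t"
    then have b: "0 < b" by auto
    show "((\<lambda>s. f s y b) has_real_derivative pdx f a y b) (at a)"
      using ck_dX[OF f1[of 1] b] by (auto simp: dX_def pdx_def intro: rd)
    show "((\<lambda>s. f a y s) has_real_derivative pdt f a y b) (at b)"
      using ck_dT[OF f1[of 1] b] by (auto simp: dT_def pdt_def intro: rd)
    show "((\<lambda>s. pdx f a y s) has_real_derivative pdt (pdx f) a y b) (at b)"
      using ck_dT[OF fx b] by (auto simp: dT_def pdt_def[of "pdx f"] intro: rd)
  next
    show "continuous_on ({x - t<..<x + t} \<times> {t - t<..<t + t}) (\<lambda>(a, b). pdt (pdx f) a y b)"
      by (rule cont_slice_xt[OF ck_cont[OF fxt] t])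
  qed (use t in auto)
  then have "pdt (pdx f) x y t = pdx (pdt f) x y t"
    by (simp add: pdx_def[of "pdt f"] DERIV_imp_deriv)
  then show "pdt (pdx f) x y t = pdx (pdt f) x y t" by simp
qed

lemma comm_ty: assumes f: "Ck_on 2 f SS" shows "eqS (pdt (pdy f)) (pdy (pdt f))"
  unfolding eqS_def
proof (intro allI impI)
  fix x y t :: real assume t: "0 < t"
  have f1: "Ck_on (Suc k) f SS" if "k \<le> 1" for k using f that
    by (cases k) (auto simp: numeral_2_eq_2)
  have fx: "Ck_on (Suc 0) (pdy f) SS" using f by (simp add: numeral_2_eq_2)
  have fxt: "Ck_on 0 (pdt (pdy f)) SS" using fx by simp
  have "((\<lambda>s. pdt f x s t) has_real_derivative pdt (pdy f) x y t) (at y)"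
  proof (rule clairaut[where g="\<lambda>a b. f x a b" and gu="\<lambda>a b. pdy f x a b" and gv="\<lambda>a b. pdt f x a b" and guv="\<lambda>a b. pdt (pdy f) x a b" and d=t])
    fix a b :: real assume ab: "\<bar>a - y\<bar> < t" "\<bar>b - t\<bar> < t"
    then have b: "0 < b" by auto
    show "((\<lambda>s. f x s b) has_real_derivative pdy f x a b) (at a)"
      using ck_dY[OF f1[of 1] b] by (auto simp: dY_def pdy_def intro: rd)
    show "((\<lambda>s. f x a s) has_real_derivative pdt f x a b) (at b)"
      using ck_dT[OF f1[of 1] b] by (auto simp: dT_def pdt_def intro: rd)
    show "((\<lambda>s. pdy f x a s) has_real_derivative pdt (pdy f) x a b) (at b)"
      using ck_dT[OF fx b] by (auto simp: dT_def pdt_def[of "pdy f"] intro: rd)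
  next
    show "continuous_on ({y - t<..<y + t} \<times> {t - t<..<t + t}) (\<lambda>(a, b). pdt (pdy f) x a b)"
      by (rule cont_slice_yt[OF ck_cont[OF fxt] t])
  qed (use t in auto)
  then have "pdt (pdy f) x y t = pdy (pdt f) x y t"
    by (simp add: pdy_def[of "pdt f"] DERIV_imp_deriv)
  then show "pdt (pdy f) x y t = pdy (pdt f) x y t" by simp
qed

lemma comm_yx: assumes f: "Ck_on 2 f SS" shows "eqS (pdy (pdx f)) (pdx (pdy f))"
  unfolding eqS_def
proof (intro allI impI)
  fix x y t :: real assume t: "0 < t"
  have f1: "Ck_on (Suc k) f SS" if "k \<le> 1" for k using f that
    by (cases k) (auto simp: numeral_2_eq_2)
  have fx: "Ck_on (Suc 0) (pdx f) SS" using f by (simp add: numeral_2_eq_2)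
  have fxt: "Ck_on 0 (pdy (pdx f)) SS" using fx by simp
  have "((\<lambda>s. pdy f s y t) has_real_derivative pdy (pdx f) x y t) (at x)"
  proof (rule clairaut[where g="\<lambda>a b. f a b t" and gu="\<lambda>a b. pdx f a b t" and gv="\<lambda>a b. pdy f a b t" and guv="\<lambda>a b. pdy (pdx f) a b t" and d=1])
    fix a b :: real assume ab: "\<bar>a - x\<bar> < 1" "\<bar>b - y\<bar> < 1"
    show "((\<lambda>s. f s b t) has_real_derivative pdx f a b t) (at a)"
      using ck_dX[OF f1[of 1] t] by (auto simp: dX_def pdx_def intro: rd)
    show "((\<lambda>s. f a s t) has_real_derivative pdy f a b t) (at b)"
      using ck_dY[OF f1[of 1] t] by (auto simp: dY_def pdy_def intro: rd)
    show "((\<lambda>s. pdx f a s t) has_real_derivative pdy (pdx f) a b t) (at b)"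
      using ck_dY[OF fx t] by (auto simp: dY_def pdy_def[of "pdx f"] intro: rd)
  next
    show "continuous_on ({x - 1<..<x + 1} \<times> {y - 1<..<y + 1}) (\<lambda>(a, b). pdy (pdx f) a b t)"
      by (rule cont_slice_xy[OF ck_cont[OF fxt] t])
  qed auto
  then have "pdy (pdx f) x y t = pdx (pdy f) x y t"
    by (simp add: pdx_def[of "pdy f"] DERIV_imp_deriv)
  then show "pdy (pdx f) x y t = pdx (pdy f) x y t" by simp
qed



lemma ck_down: "Ck_on (Suc k) f SS \<Longrightarrow> Ck_on k f SS"
proof (induction k arbitrary: f)
  case 0 then show ?case by simp
next
  case (Suc k)
  have h: "continuous_on SS (\<lambda>(x, y, t). f x y t)" "\<forall>(x, y, t) \<in> SS. partials_exist f x y t"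
    "Ck_on (Suc k) (pdx f) SS" "Ck_on (Suc k) (pdy f) SS" "Ck_on (Suc k) (pdt f) SS"
    using Suc.prems unfolding Ck_on.simps(2)[of "Suc k"] by blast+
  show ?case unfolding Ck_on.simps(2)[of k] using h Suc.IH by blast
qed

lemma ck1_dX [simp]: "Ck_on (Suc 0) f SS \<Longrightarrow> 0 < t \<Longrightarrow> dX f x y t" using ck_dX[of 0] by simp
lemma ck1_dY [simp]: "Ck_on (Suc 0) f SS \<Longrightarrow> 0 < t \<Longrightarrow> dY f x y t" using ck_dY[of 0] by simp
lemma ck1_dT [simp]: "Ck_on (Suc 0) f SS \<Longrightarrow> 0 < t \<Longrightarrow> dT f x y t" using ck_dT[of 0] by simp

lemma ckx2: "Ck_on 2 f SS \<Longrightarrow> Ck_on (Suc 0) (pdx f) SS" by (simp add: numeral_2_eq_2)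
lemma ckx3: "Ck_on 3 f SS \<Longrightarrow> Ck_on 2 (pdx f) SS" by (simp add: numeral_3_eq_3 numeral_2_eq_2)
lemma ckx4: "Ck_on 4 f SS \<Longrightarrow> Ck_on 3 (pdx f) SS" by (simp add: numeral_3_eq_3 eval_nat_numeral)
lemma cky2: "Ck_on 2 f SS \<Longrightarrow> Ck_on (Suc 0) (pdy f) SS" by (simp add: numeral_2_eq_2)
lemma cky3: "Ck_on 3 f SS \<Longrightarrow> Ck_on 2 (pdy f) SS" by (simp add: numeral_3_eq_3 numeral_2_eq_2)
lemma cky4: "Ck_on 4 f SS \<Longrightarrow> Ck_on 3 (pdy f) SS" by (simp add: numeral_3_eq_3 eval_nat_numeral)
lemma ckt2: "Ck_on 2 f SS \<Longrightarrow> Ck_on (Suc 0) (pdt f) SS" by (simp add: numeral_2_eq_2)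
lemma ckt3: "Ck_on 3 f SS \<Longrightarrow> Ck_on 2 (pdt f) SS" by (simp add: numeral_3_eq_3 numeral_2_eq_2)
lemma ckt4: "Ck_on 4 f SS \<Longrightarrow> Ck_on 3 (pdt f) SS" by (simp add: numeral_3_eq_3 eval_nat_numeral)
lemmas ckrules [simp] = ckx2 ckx3 ckx4 cky2 cky3 cky4 ckt2 ckt3 ckt4
declare Ck_on.simps [simp del]

lemma ck_add: "Ck_on k f SS \<Longrightarrow> Ck_on k g SS \<Longrightarrow> Ck_on k (\<lambda>x y t. f x y t + g x y t) SS"
  by (rule Ck_cong[OF _ ck_lin[of k f g 1 1]]) (auto simp: eqS_def)
lemma ck_diff: "Ck_on k f SS \<Longrightarrow> Ck_on k g SS \<Longrightarrow> Ck_on k (\<lambda>x y t. f x y t - g x y t) SS"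
  by (rule Ck_cong[OF _ ck_lin[of k f g 1 "-1"]]) (auto simp: eqS_def)

lemma ck43: "Ck_on 4 f SS \<Longrightarrow> Ck_on 3 f SS" using ck_down[of 3 f] by (simp add: eval_nat_numeral)
lemma ck32: "Ck_on 3 f SS \<Longrightarrow> Ck_on 2 f SS" using ck_down[of 2 f] by (simp add: eval_nat_numeral)
lemma ck21: "Ck_on 2 f SS \<Longrightarrow> Ck_on (Suc 0) f SS" using ck_down[of 1 f] by (simp add: eval_nat_numeral)

lemma cT_XX: "Ck_on 3 g SS \<Longrightarrow> eqS (pdt (pdx (pdx g))) (pdx (pdx (pdt g)))"
  by (rule eqS_trans[OF comm_tx eqS_pdx[OF comm_tx]]) (auto intro: ck32)
lemma cT_YY: "Ck_on 3 g SS \<Longrightarrow> eqS (pdt (pdy (pdy g))) (pdy (pdy (pdt g)))"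
  by (rule eqS_trans[OF comm_ty eqS_pdy[OF comm_ty]]) (auto intro: ck32)
lemma cT_XY: "Ck_on 3 g SS \<Longrightarrow> eqS (pdt (pdx (pdy g))) (pdx (pdy (pdt g)))"
  by (rule eqS_trans[OF comm_tx eqS_pdx[OF comm_ty]]) (auto intro: ck32)
lemma cT_XXX: "Ck_on 4 g SS \<Longrightarrow> eqS (pdt (pdx (pdx (pdx g)))) (pdx (pdx (pdx (pdt g))))"
  by (rule eqS_trans[OF comm_tx eqS_pdx[OF cT_XX]]) (auto intro: ck43 ck32)
lemma cT_XXY: "Ck_on 4 g SS \<Longrightarrow> eqS (pdt (pdx (pdx (pdy g)))) (pdx (pdx (pdy (pdt g))))"
  by (rule eqS_trans[OF comm_tx eqS_pdx[OF cT_XY]]) (auto intro: ck43 ck32)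
lemma cT_XYY: "Ck_on 4 g SS \<Longrightarrow> eqS (pdt (pdx (pdy (pdy g)))) (pdx (pdy (pdy (pdt g))))"
  by (rule eqS_trans[OF comm_tx eqS_pdx[OF cT_YY]]) (auto intro: ck43 ck32)
lemma cT_YYY: "Ck_on 4 g SS \<Longrightarrow> eqS (pdt (pdy (pdy (pdy g)))) (pdy (pdy (pdy (pdt g))))"
  by (rule eqS_trans[OF comm_ty eqS_pdy[OF cT_YY]]) (auto intro: ck43 ck32)
lemma cY_XX: "Ck_on 3 g SS \<Longrightarrow> eqS (pdy (pdx (pdx g))) (pdx (pdx (pdy g)))"
  by (rule eqS_trans[OF comm_yx eqS_pdx[OF comm_yx]]) (auto intro: ck32)



theorem theorem5p1:
  fixes c :: real and lam :: "real \<Rightarrow> real"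
    and fpp fpm fmp fmm :: "real \<Rightarrow> real \<Rightarrow> real \<Rightarrow> real"
  assumes c_pos: "c > 0"
    and lam_C2: "Ck_on1 2 lam {0<..}"
    and reg: "Ck_on 4 fpp (UNIV \<times> UNIV \<times> {0<..})" "Ck_on 4 fpm (UNIV \<times> UNIV \<times> {0<..})"
             "Ck_on 4 fmp (UNIV \<times> UNIV \<times> {0<..})" "Ck_on 4 fmm (UNIV \<times> UNIV \<times> {0<..})"
    and eq_pp: "\<And>x y t. t > 0 \<Longrightarrow> pdt fpp x y t =
        - (c/2) * pdx fpp x y t - (c/2) * pdy fpp x y t
        + lam t / 2 * (fmp x y t + fpm x y t - 2 * fpp x y t)"
    and eq_pm: "\<And>x y t. t > 0 \<Longrightarrow> pdt fpm x y t =
        - (c/2) * pdx fpm x y t + (c/2) * pdy fpm x y t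
        + lam t / 2 * (fmm x y t + fpp x y t - 2 * fpm x y t)"
    and eq_mp: "\<And>x y t. t > 0 \<Longrightarrow> pdt fmp x y t =
        (c/2) * pdx fmp x y t - (c/2) * pdy fmp x y t
        + lam t / 2 * (fpp x y t + fmm x y t - 2 * fmp x y t)"
    and eq_mm: "\<And>x y t. t > 0 \<Longrightarrow> pdt fmm x y t =
        (c/2) * pdx fmm x y t + (c/2) * pdy fmm x y t
        + lam t / 2 * (fpm x y t + fmp x y t - 2 * fmm x y t)"
  shows "\<forall>x y t. t > 0 \<longrightarrow>
    (let p = (\<lambda>x y t. fpp x y t + fpm x y t + fmp x y t + fmm x y t);
         l = lam t; l1 = deriv lam t; l2 = deriv (deriv lam) t
     in pdt (pdt (pdt (pdt p))) x y t =
          - 4 * l * pdt (pdt (pdt p)) x y t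
          + ((c^2/2) * lap (pdt (pdt p)) x y t - (5 * l^2 + 4 * l1) * pdt (pdt p) x y t)
          + (l * c^2 * lap (pdt p) x y t - (5 * l * l1 + 2 * l^3 + l2) * pdt p x y t)
          - (c^4/16) * hyp_op (hyp_op p) x y t
          + (c^2/2) * (l^2 + l1) * lap p x y t)"
proof -
  define a where "a = c/2"
  define p where "p = (\<lambda>x y t. fpp x y t + fpm x y t + fmp x y t + fmm x y t)"
  define r where "r = (\<lambda>x y t. fpp x y t + fpm x y t - fmp x y t - fmm x y t)"
  define s where "s = (\<lambda>x y t. fpp x y t - fpm x y t + fmp x y t - fmm x y t)"
  define q where "q = (\<lambda>x y t. fpp x y t - fpm x y t - fmp x y t + fmm x y t)"
  have C4: "Ck_on 4 p SS" "Ck_on 4 q SS" "Ck_on 4 r SS" "Ck_on 4 s SS"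
    unfolding p_def q_def r_def s_def by (intro ck_add ck_diff reg)+
  have C3: "Ck_on 3 p SS" "Ck_on 3 q SS" "Ck_on 3 r SS" "Ck_on 3 s SS" using C4 by (auto intro: ck43)
  have C2: "Ck_on 2 p SS" "Ck_on 2 q SS" "Ck_on 2 r SS" "Ck_on 2 s SS" using C3 by (auto intro: ck32)
  have C1: "Ck_on (Suc 0) p SS" "Ck_on (Suc 0) q SS" "Ck_on (Suc 0) r SS" "Ck_on (Suc 0) s SS" using C2 by (auto intro: ck21)
  have F1: "Ck_on (Suc 0) fpp SS" "Ck_on (Suc 0) fpm SS" "Ck_on (Suc 0) fmp SS" "Ck_on (Suc 0) fmm SS"
    using reg by (auto intro: ck21 ck32 ck43)
  note CC [simp] = C4 C3 C2 C1 F1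
  have lamd [simp]: "lam differentiable (at t)" "deriv lam differentiable (at t)" if "0 < t" for t
    using lam_C2 that by (auto simp: numeral_2_eq_2)
  define R1f where "R1f = (\<lambda>x y t. -(a * pdx r x y t) - a * pdy s x y t)"
  define R2f where "R2f = (\<lambda>x y t. -(a * pdx p x y t) - a * pdy q x y t - lam t * r x y t)"
  define R3f where "R3f = (\<lambda>x y t. -(a * pdy p x y t) - a * pdx q x y t - lam t * s x y t)"
  define R4f where "R4f = (\<lambda>x y t. -(a * pdx s x y t) - a * pdy r x y t - 2 * (lam t * q x y t))"
  define E2f where "E2f = (\<lambda>x y t. a * a * pdx (pdx p) x y t + a * a * pdy (pdy p) x y t + 2 * (a * a * pdx (pdy q) x y t) + a * (lam t * pdx r x y t) + a * (lam t * pdy s x y t))"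
  define E3f where "E3f = (\<lambda>x y t. -(a^3 * pdx (pdx (pdx r)) x y t) - 3 * a^3 * pdx (pdx (pdy s)) x y t - 3 * a^3 * pdx (pdy (pdy r)) x y t - a^3 * pdy (pdy (pdy s)) x y t - 6 * a^2 * (lam t * pdx (pdy q) x y t) - a^2 * (lam t * pdx (pdx p) x y t) - a^2 * (lam t * pdy (pdy p) x y t) + a * (deriv lam t * pdx r x y t) + a * (deriv lam t * pdy s x y t) - a * (lam t * (lam t * pdx r x y t)) - a * (lam t * (lam t * pdy s x y t)))"
  define R1x where "R1x = (\<lambda>x y t. -(a * pdx (pdx r) x y t) - a * pdx (pdy s) x y t)"
  define R1y where "R1y = (\<lambda>x y t. -(a * pdx (pdy r) x y t) - a * pdy (pdy s) x y t)"
  define R1xx where "R1xx = (\<lambda>x y t. -(a * pdx (pdx (pdx r)) x y t) - a * pdx (pdx (pdy s)) x y t)"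
  define R1yy where "R1yy = (\<lambda>x y t. -(a * pdx (pdy (pdy r)) x y t) - a * pdy (pdy (pdy s)) x y t)"
  define R2x where "R2x = (\<lambda>x y t. -(a * pdx (pdx p) x y t) - a * pdx (pdy q) x y t - lam t * pdx r x y t)"
  define R2xx where "R2xx = (\<lambda>x y t. -(a * pdx (pdx (pdx p)) x y t) - a * pdx (pdx (pdy q)) x y t - lam t * pdx (pdx r) x y t)"
  define R2xxx where "R2xxx = (\<lambda>x y t. -(a * pdx (pdx (pdx (pdx p))) x y t) - a * pdx (pdx (pdx (pdy q))) x y t - lam t * pdx (pdx (pdx r)) x y t)"
  define R2y where "R2y = (\<lambda>x y t. -(a * pdx (pdy p) x y t) - a * pdy (pdy q) x y t - lam t * pdy r x y t)"
  define R2yy where "R2yy = (\<lambda>x y t. -(a * pdx (pdy (pdy p)) x y t) - a * pdy (pdy (pdy q)) x y t - lam t * pdy (pdy r) x y t)"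
  define R2yyx where "R2yyx = (\<lambda>x y t. -(a * pdx (pdx (pdy (pdy p))) x y t) - a * pdx (pdy (pdy (pdy q))) x y t - lam t * pdx (pdy (pdy r)) x y t)"
  define R3y where "R3y = (\<lambda>x y t. -(a * pdy (pdy p) x y t) - a * pdx (pdy q) x y t - lam t * pdy s x y t)"
  define R3xy where "R3xy = (\<lambda>x y t. -(a * pdx (pdy (pdy p)) x y t) - a * pdx (pdx (pdy q)) x y t - lam t * pdx (pdy s) x y t)"
  define R3xyx where "R3xyx = (\<lambda>x y t. -(a * pdx (pdx (pdy (pdy p))) x y t) - a * pdx (pdx (pdx (pdy q))) x y t - lam t * pdx (pdx (pdy s)) x y t)"
  define R3yy where "R3yy = (\<lambda>x y t. -(a * pdy (pdy (pdy p)) x y t) - a * pdx (pdy (pdy q)) x y t - lam t * pdy (pdy s) x y t)"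
  define R3yyy where "R3yyy = (\<lambda>x y t. -(a * pdy (pdy (pdy (pdy p))) x y t) - a * pdx (pdy (pdy (pdy q))) x y t - lam t * pdy (pdy (pdy s)) x y t)"
  define R4y where "R4y = (\<lambda>x y t. -(a * pdx (pdy s) x y t) - a * pdy (pdy r) x y t - 2 * (lam t * pdy q x y t))"
  define R4yx where "R4yx = (\<lambda>x y t. -(a * pdx (pdx (pdy s)) x y t) - a * pdx (pdy (pdy r)) x y t - 2 * (lam t * pdx (pdy q) x y t))"
  define E2x where "E2x = (\<lambda>x y t. a * a * pdx (pdx (pdx p)) x y t + a * a * pdx (pdy (pdy p)) x y t + 2 * (a * a * pdx (pdx (pdy q)) x y t) + a * (lam t * pdx (pdx r) x y t) + a * (lam t * pdx (pdy s) x y t))"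
  define E2xx where "E2xx = (\<lambda>x y t. a * a * pdx (pdx (pdx (pdx p))) x y t + a * a * pdx (pdx (pdy (pdy p))) x y t + 2 * (a * a * pdx (pdx (pdx (pdy q))) x y t) + a * (lam t * pdx (pdx (pdx r)) x y t) + a * (lam t * pdx (pdx (pdy s)) x y t))"
  define E2y where "E2y = (\<lambda>x y t. a * a * pdx (pdx (pdy p)) x y t + a * a * pdy (pdy (pdy p)) x y t + 2 * (a * a * pdx (pdy (pdy q)) x y t) + a * (lam t * pdx (pdy r) x y t) + a * (lam t * pdy (pdy s) x y t))"
  define E2yy where "E2yy = (\<lambda>x y t. a * a * pdx (pdx (pdy (pdy p))) x y t + a * a * pdy (pdy (pdy (pdy p))) x y t + 2 * (a * a * pdx (pdy (pdy (pdy q))) x y t) + a * (lam t * pdx (pdy (pdy r)) x y t) + a * (lam t * pdy (pdy (pdy s)) x y t))"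
  define H1x where "H1x = (\<lambda>x y t. pdx (pdx (pdx p)) x y t - pdx (pdy (pdy p)) x y t)"
  define H1xx where "H1xx = (\<lambda>x y t. pdx (pdx (pdx (pdx p))) x y t - pdx (pdx (pdy (pdy p))) x y t)"
  define H1y where "H1y = (\<lambda>x y t. pdx (pdx (pdy p)) x y t - pdy (pdy (pdy p)) x y t)"
  define H1yy where "H1yy = (\<lambda>x y t. pdx (pdx (pdy (pdy p))) x y t - pdy (pdy (pdy (pdy p))) x y t)"
  have cyxp: "eqS (pdy (pdx p)) (pdx (pdy p))" by (rule comm_yx) simp
  have cyxq: "eqS (pdy (pdx q)) (pdx (pdy q))" by (rule comm_yx) simp
  have cyxr: "eqS (pdy (pdx r)) (pdx (pdy r))" by (rule comm_yx) simp
  have cyxs: "eqS (pdy (pdx s)) (pdx (pdy s))" by (rule comm_yx) simp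
  have cyxyp: "eqS (pdy (pdx (pdy p))) (pdx (pdy (pdy p)))" by (rule comm_yx) simp
  have cyxyq: "eqS (pdy (pdx (pdy q))) (pdx (pdy (pdy q)))" by (rule comm_yx) simp
  have cyxyr: "eqS (pdy (pdx (pdy r))) (pdx (pdy (pdy r)))" by (rule comm_yx) simp
  have cyxxp: "eqS (pdy (pdx (pdx p))) (pdx (pdx (pdy p)))" by (rule cY_XX) simp
  have cyxxyp: "eqS (pdy (pdx (pdx (pdy p)))) (pdx (pdx (pdy (pdy p))))" by (rule cY_XX) simp
  have cyxyyq: "eqS (pdy (pdx (pdy (pdy q)))) (pdx (pdy (pdy (pdy q))))" by (rule comm_yx) simp
  note canon = eqSD[OF cyxp] eqSD[OF cyxq] eqSD[OF cyxr] eqSD[OF cyxs] eqSD[OF cyxyp] eqSD[OF cyxyq] eqSD[OF cyxyr] eqSD[OF cyxxp] eqSD[OF cyxxyp] eqSD[OF cyxyyq]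
  have R1: "eqS (pdt p) R1f" unfolding eqS_def p_def r_def s_def R1f_def by (simp add: eq_pp eq_pm eq_mp eq_mm a_def algebra_simps)
  have R2: "eqS (pdt r) R2f" unfolding eqS_def p_def r_def q_def R2f_def by (simp add: eq_pp eq_pm eq_mp eq_mm a_def algebra_simps)
  have R3: "eqS (pdt s) R3f" unfolding eqS_def p_def s_def q_def R3f_def by (simp add: eq_pp eq_pm eq_mp eq_mm a_def algebra_simps)
  have R4: "eqS (pdt q) R4f" unfolding eqS_def r_def s_def q_def R4f_def by (simp add: eq_pp eq_pm eq_mp eq_mm a_def algebra_simps)
  note dfs = R1f_def R2f_def R3f_def R4f_def E2f_def E3f_def R1x_def R1y_def R1xx_def R1yy_def R2x_def R2xx_def R2xxx_def R2y_def R2yy_def R2yyx_def R3y_def R3xy_def R3xyx_def R3yy_def R3yyy_def R4y_def R4yx_def E2x_def E2xx_def E2y_def E2yy_def H1x_def H1xx_def H1y_def H1yy_def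
  have R1x_e: "eqS (pdx R1f) R1x" unfolding eqS_def by (simp add: dfs canon hyp_op_def)
  have R1y_e: "eqS (pdy R1f) R1y" unfolding eqS_def by (simp add: dfs canon hyp_op_def)
  have R1xx_e: "eqS (pdx R1x) R1xx" unfolding eqS_def by (simp add: dfs canon hyp_op_def)
  have R1yy_e: "eqS (pdy R1y) R1yy" unfolding eqS_def by (simp add: dfs canon hyp_op_def)
  have R2x_e: "eqS (pdx R2f) R2x" unfolding eqS_def by (simp add: dfs canon hyp_op_def)
  have R2xx_e: "eqS (pdx R2x) R2xx" unfolding eqS_def by (simp add: dfs canon hyp_op_def)
  have R2xxx_e: "eqS (pdx R2xx) R2xxx" unfolding eqS_def by (simp add: dfs canon hyp_op_def)
  have R2y_e: "eqS (pdy R2f) R2y" unfolding eqS_def by (simp add: dfs canon hyp_op_def)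
  have R2yy_e: "eqS (pdy R2y) R2yy" unfolding eqS_def by (simp add: dfs canon hyp_op_def)
  have R2yyx_e: "eqS (pdx R2yy) R2yyx" unfolding eqS_def by (simp add: dfs canon hyp_op_def)
  have R3y_e: "eqS (pdy R3f) R3y" unfolding eqS_def by (simp add: dfs canon hyp_op_def)
  have R3xy_e: "eqS (pdx R3y) R3xy" unfolding eqS_def by (simp add: dfs canon hyp_op_def)
  have R3xyx_e: "eqS (pdx R3xy) R3xyx" unfolding eqS_def by (simp add: dfs canon hyp_op_def)
  have R3yy_e: "eqS (pdy R3y) R3yy" unfolding eqS_def by (simp add: dfs canon hyp_op_def)
  have R3yyy_e: "eqS (pdy R3yy) R3yyy" unfolding eqS_def by (simp add: dfs canon hyp_op_def)
  have R4y_e: "eqS (pdy R4f) R4y" unfolding eqS_def by (simp add: dfs canon hyp_op_def)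
  have R4yx_e: "eqS (pdx R4y) R4yx" unfolding eqS_def by (simp add: dfs canon hyp_op_def)
  have E2x_e: "eqS (pdx E2f) E2x" unfolding eqS_def by (simp add: dfs canon hyp_op_def)
  have E2xx_e: "eqS (pdx E2x) E2xx" unfolding eqS_def by (simp add: dfs canon hyp_op_def)
  have E2y_e: "eqS (pdy E2f) E2y" unfolding eqS_def by (simp add: dfs canon hyp_op_def)
  have E2yy_e: "eqS (pdy E2y) E2yy" unfolding eqS_def by (simp add: dfs canon hyp_op_def)
  have H1x_e: "eqS (pdx (hyp_op p)) H1x" unfolding eqS_def by (simp add: dfs canon hyp_op_def)
  have H1xx_e: "eqS (pdx H1x) H1xx" unfolding eqS_def by (simp add: dfs canon hyp_op_def)
  have H1y_e: "eqS (pdy (hyp_op p)) H1y" unfolding eqS_def by (simp add: dfs canon hyp_op_def)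
  have H1yy_e: "eqS (pdy H1y) H1yy" unfolding eqS_def by (simp add: dfs canon hyp_op_def)
  have TXr: "eqS (pdt (pdx r)) R2x" by (rule eqS_trans[OF comm_tx[OF C2(3)] eqS_trans[OF eqS_pdx[OF R2] R2x_e]])
  have TYs: "eqS (pdt (pdy s)) R3y" by (rule eqS_trans[OF comm_ty[OF C2(4)] eqS_trans[OF eqS_pdy[OF R3] R3y_e]])
  have TXXp: "eqS (pdt (pdx (pdx p))) R1xx" by (rule eqS_trans[OF cT_XX[OF C3(1)] eqS_trans[OF eqS_pdx[OF eqS_pdx[OF R1]] eqS_trans[OF eqS_pdx[OF R1x_e] R1xx_e]]])
  have TYYp: "eqS (pdt (pdy (pdy p))) R1yy" by (rule eqS_trans[OF cT_YY[OF C3(1)] eqS_trans[OF eqS_pdy[OF eqS_pdy[OF R1]] eqS_trans[OF eqS_pdy[OF R1y_e] R1yy_e]]])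
  have TXYq: "eqS (pdt (pdx (pdy q))) R4yx" by (rule eqS_trans[OF cT_XY[OF C3(2)] eqS_trans[OF eqS_pdx[OF eqS_pdy[OF R4]] eqS_trans[OF eqS_pdx[OF R4y_e] R4yx_e]]])
  have TXXXr: "eqS (pdt (pdx (pdx (pdx r)))) R2xxx" by (rule eqS_trans[OF cT_XXX[OF C4(3)] eqS_trans[OF eqS_pdx[OF eqS_pdx[OF eqS_pdx[OF R2]]] eqS_trans[OF eqS_pdx[OF eqS_pdx[OF R2x_e]] eqS_trans[OF eqS_pdx[OF R2xx_e] R2xxx_e]]]])
  have TXXYs: "eqS (pdt (pdx (pdx (pdy s)))) R3xyx" by (rule eqS_trans[OF cT_XXY[OF C4(4)] eqS_trans[OF eqS_pdx[OF eqS_pdx[OF eqS_pdy[OF R3]]] eqS_trans[OF eqS_pdx[OF eqS_pdx[OF R3y_e]] eqS_trans[OF eqS_pdx[OF R3xy_e] R3xyx_e]]]])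
  have TXYYr: "eqS (pdt (pdx (pdy (pdy r)))) R2yyx" by (rule eqS_trans[OF cT_XYY[OF C4(3)] eqS_trans[OF eqS_pdx[OF eqS_pdy[OF eqS_pdy[OF R2]]] eqS_trans[OF eqS_pdx[OF eqS_pdy[OF R2y_e]] eqS_trans[OF eqS_pdx[OF R2yy_e] R2yyx_e]]]])
  have TYYYs: "eqS (pdt (pdy (pdy (pdy s)))) R3yyy" by (rule eqS_trans[OF cT_YYY[OF C4(4)] eqS_trans[OF eqS_pdy[OF eqS_pdy[OF eqS_pdy[OF R3]]] eqS_trans[OF eqS_pdy[OF eqS_pdy[OF R3y_e]] eqS_trans[OF eqS_pdy[OF R3yy_e] R3yyy_e]]]])
  note TF = eqSD[OF TXr] eqSD[OF TYs] eqSD[OF TXXp] eqSD[OF TYYp] eqSD[OF TXYq] eqSD[OF TXXXr] eqSD[OF TXXYs] eqSD[OF TXYYr] eqSD[OF TYYYs]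
  have E2: "eqS (pdt (pdt p)) E2f" unfolding eqS_def
  proof (intro allI impI)
    fix x y t :: real assume t: "0 < t"
    have "pdt (pdt p) x y t = pdt R1f x y t" by (rule eqSD[OF eqS_pdt[OF R1] t])
    also have "... = E2f x y t" using t by (simp add: dfs canon eqSD[OF TXr] eqSD[OF TYs] algebra_simps)
    finally show "pdt (pdt p) x y t = E2f x y t" .
  qed
  have E3: "eqS (pdt (pdt (pdt p))) E3f" unfolding eqS_def
  proof (intro allI impI)
    fix x y t :: real assume t: "0 < t"
    have "pdt (pdt (pdt p)) x y t = pdt E2f x y t" by (rule eqSD[OF eqS_pdt[OF E2] t])
    also have "... = E3f x y t" using t by (simp add: dfs canon eqSD[OF TXr] eqSD[OF TYs] eqSD[OF TXXp] eqSD[OF TYYp] eqSD[OF TXYq] eqSD[OF TXXXr] eqSD[OF TXXYs] eqSD[OF TXYYr] eqSD[OF TYYYs] algebra_simps power2_eq_square power3_eq_cube)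
    finally show "pdt (pdt (pdt p)) x y t = E3f x y t" .
  qed
  have LT2x: "eqS (pdx (pdx (pdt (pdt p)))) E2xx" by (rule eqS_trans[OF eqS_pdx[OF eqS_pdx[OF E2]] eqS_trans[OF eqS_pdx[OF E2x_e] E2xx_e]])
  have LT2y: "eqS (pdy (pdy (pdt (pdt p)))) E2yy" by (rule eqS_trans[OF eqS_pdy[OF eqS_pdy[OF E2]] eqS_trans[OF eqS_pdy[OF E2y_e] E2yy_e]])
  have LT1x: "eqS (pdx (pdx (pdt p))) R1xx" by (rule eqS_trans[OF eqS_pdx[OF eqS_pdx[OF R1]] eqS_trans[OF eqS_pdx[OF R1x_e] R1xx_e]])
  have LT1y: "eqS (pdy (pdy (pdt p))) R1yy" by (rule eqS_trans[OF eqS_pdy[OF eqS_pdy[OF R1]] eqS_trans[OF eqS_pdy[OF R1y_e] R1yy_e]])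
  have HXX: "eqS (pdx (pdx ((hyp_op p)))) H1xx" by (rule eqS_trans[OF eqS_pdx[OF H1x_e] H1xx_e])
  have HYY: "eqS (pdy (pdy ((hyp_op p)))) H1yy" by (rule eqS_trans[OF eqS_pdy[OF H1y_e] H1yy_e])
  have lap_app: "\<And>f x y t. lap f x y t = pdx (pdx f) x y t + pdy (pdy f) x y t" by (simp add: lap_def)
  have hyp_app: "\<And>f x y t. hyp_op f x y t = pdx (pdx f) x y t - pdy (pdy f) x y t" by (simp add: hyp_op_def)
  have cE: "c = 2 * a" by (simp add: a_def)
  show ?thesis unfolding Let_def p_def[symmetric]
  proof (intro allI impI)
    fix x y t :: real assume t: "0 < t"
    have T4: "pdt (pdt (pdt (pdt p))) x y t = pdt E3f x y t" by (rule eqSD[OF eqS_pdt[OF E3] t])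
    show "pdt (pdt (pdt (pdt p))) x y t =
          - 4 * lam t * pdt (pdt (pdt p)) x y t
          + ((c^2/2) * lap (pdt (pdt p)) x y t - (5 * (lam t)^2 + 4 * deriv lam t) * pdt (pdt p) x y t)
          + (lam t * c^2 * lap (pdt p) x y t - (5 * lam t * deriv lam t + 2 * (lam t)^3 + deriv (deriv lam) t) * pdt p x y t)
          - (c^4/16) * hyp_op (hyp_op p) x y t
          + (c^2/2) * ((lam t)^2 + deriv lam t) * lap p x y t"
      using t unfolding T4 lap_app hyp_app[of "hyp_op p" x y t]
      by (simp add: dfs canon TF eqSD[OF E3] eqSD[OF E2] eqSD[OF R1] eqSD[OF LT2x] eqSD[OF LT2y] eqSD[OF LT1x] eqSD[OF LT1y] eqSD[OF HXX] eqSD[OF HYY] cE algebra_simps power2_eq_square power3_eq_cube power4_eq_xxxx)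
  qed
qed



end
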